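(* Let $X$ be a first-countable Hausdorff topological space and $f:X\to X$ a closed mapping. Suppose there exists $x_0\in X$ such that for each open cover $\mathcal{U}$ of $X$ there are $n\in\mathbb{N}_0$ and $U\in\mathcal{U}$ with $\{f^n(x_0),f^{n+1}(x_0)\}\subseteq U$. Then $f$ has a fixed point.
   Context: A mapping is closed if it maps closed sets to closed sets (continuity is not assumed). $\mathbb{N}_0=\{0,1,2,\dots\}$; $f^n$ is the $n$-fold iterate of $f$, $f^0$ the identity. *)

theory Defs
  imports "HOL-Analysis.Analysis"
begin

end

theory Submission
  imports Defs
begin

lemma orbit_fin_or_inj:
  fixes f :: "'a \<Rightarrow> 'a"
  shows "finite (range (\<lambda>n. (f ^^ n) x0)) \<or> inj (\<lambda>n. (f ^^ n) x0)"
proof (rule disjCI)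
  assume "\<not> inj (\<lambda>n. (f ^^ n) x0)"
  then obtain i j where ij: "i < j" "(f ^^ i) x0 = (f ^^ j) x0"
    unfolding inj_def by (metis linorder_neqE_nat)
  have "(f ^^ n) x0 \<in> (\<lambda>n. (f ^^ n) x0) ` {..<j}" for n
  proof (induction n rule: less_induct)
    case (less n)
    show ?case
    proof (cases "n < j")
      case True then show ?thesis by auto
    next
      case False
      have "(f ^^ n) x0 = (f ^^ (n - j)) ((f ^^ j) x0)"
        using False by (metis funpow_add le_add_diff_inverse2 not_less o_apply)
      also have "\<dots> = (f ^^ (n - j)) ((f ^^ i) x0)" using ij by simp
      also have "\<dots> = (f ^^ (n - j + i)) x0" by (simp add: funpow_add)
      finally show ?thesis using less[of "n - j + i"] ij False by auto
    qed
  qed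
  then have "range (\<lambda>n. (f ^^ n) x0) \<subseteq> (\<lambda>n. (f ^^ n) x0) ` {..<j}" by auto
  then show "finite (range (\<lambda>n. (f ^^ n) x0))" using finite_surj by blast
qed

lemma fiber_finite:
  fixes f :: "'a \<Rightarrow> 'a"
  shows "finite {z \<in> range (\<lambda>n. (f ^^ n) x0). f z = y}"
  using orbit_fin_or_inj[of f x0]
proof
  assume inj: "inj (\<lambda>n. (f ^^ n) x0)"
  have "{n. (f ^^ Suc n) x0 = y} \<subseteq> {n. Suc n \<in> (\<lambda>n. (f ^^ n) x0) -` {y}}" by auto
  moreover have "finite ((\<lambda>n. (f ^^ n) x0) -` {y})"
    using inj by (simp add: finite_vimageI)
  then have "finite (Suc -` ((\<lambda>n. (f ^^ n) x0) -` {y}))"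
    by (simp add: finite_vimageI)
  ultimately have "finite {n. (f ^^ Suc n) x0 = y}"
    by (metis (no_types, lifting) finite_subset mem_Collect_eq subsetI vimage_eq)
  moreover have "{z \<in> range (\<lambda>n. (f ^^ n) x0). f z = y} = (\<lambda>n. (f ^^ n) x0) ` {n. (f ^^ Suc n) x0 = y}"
    by auto
  ultimately show ?thesis by simp
qed auto

theorem theorem6:
  fixes f :: "'a::{first_countable_topology, t2_space} \<Rightarrow> 'a"
    and x0 :: 'a
  assumes closed_map: "\<And>S. closed S \<Longrightarrow> closed (f ` S)"
    and cover: "\<And>\<U>. (\<forall>U\<in>\<U>. open U) \<Longrightarrow> \<Union>\<U> = UNIV \<Longrightarrow>
                   \<exists>n::nat. \<exists>U\<in>\<U>. {(f ^^ n) x0, (f ^^ Suc n) x0} \<subseteq> U"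
  shows "\<exists>x. f x = x"
proof (rule ccontr)
  assume nofix: "\<not> (\<exists>x. f x = x)"
  have claim: "\<exists>U. open U \<and> y \<in> U \<and> (\<forall>n. \<not> {(f ^^ n) x0, (f ^^ Suc n) x0} \<subseteq> U)" for y
  proof (rule ccontr)
    assume "\<not> ?thesis"
    then have H: "\<And>U. open U \<Longrightarrow> y \<in> U \<Longrightarrow> \<exists>n. {(f ^^ n) x0, (f ^^ Suc n) x0} \<subseteq> U" by blast
    define F where "F = {z \<in> range (\<lambda>n. (f ^^ n) x0). f z = y}"
    have finF: "finite F" unfolding F_def by (rule fiber_finite)
    have yF: "y \<notin> F" using nofix unfolding F_def by auto
    obtain A :: "nat \<Rightarrow> 'a set" where A: "\<And>i. open (A i)" "\<And>i. y \<in> A i"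
      "\<And>S. open S \<Longrightarrow> y \<in> S \<Longrightarrow> eventually (\<lambda>i. A i \<subseteq> S) sequentially"
      using countable_basis_at_decseq by blast
    have "open (A k - F)" for k using A(1) finF by (simp add: finite_imp_closed open_Diff)
    then have "\<exists>n. {(f ^^ n) x0, (f ^^ Suc n) x0} \<subseteq> A k - F" for k
      using H A(2) yF by blast
    then obtain nn where nn: "\<And>k. {(f ^^ nn k) x0, (f ^^ Suc (nn k)) x0} \<subseteq> A k - F"
      by metis
    define a where "a k = (f ^^ nn k) x0" for k
    have fa: "f (a k) = (f ^^ Suc (nn k)) x0" for k by (simp add: a_def)
    have lim1: "a \<longlonglongrightarrow> y"
      unfolding tendsto_def
    proof (intro allI impI)
      fix S assume "open S" "y \<in> S"
      from A(3)[OF this] show "eventually (\<lambda>k. a k \<in> S) sequentially"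
        by eventually_elim (use nn a_def in auto)
    qed
    have lim2: "(\<lambda>k. f (a k)) \<longlonglongrightarrow> y"
      unfolding tendsto_def
    proof (intro allI impI)
      fix S assume "open S" "y \<in> S"
      from A(3)[OF this] show "eventually (\<lambda>k. f (a k) \<in> S) sequentially"
        by eventually_elim (use nn fa in auto)
    qed
    have "compactin euclidean (insert y (range a))"
      by (rule compactin_sequence_with_limit) (use lim1 in auto)
    then have "compact (insert y (range a))" by simp
    then have "closed (insert y (range a))" by (rule compact_imp_closed)
    then have cl: "closed (f ` insert y (range a))" by (rule closed_map)
    have "y \<in> f ` insert y (range a)"
      by (rule closed_sequentially[OF cl _ lim2]) auto
    moreover have "y \<noteq> f y" using nofix by metis
    ultimately have "y \<in> f ` range a" by auto
    then obtain k where "y = f (a k)" by auto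
    then have "a k \<in> F" unfolding F_def a_def by auto
    then show False using nn[of k] a_def by auto
  qed
  then obtain U where U: "\<And>y. open (U y) \<and> y \<in> U y \<and> (\<forall>n. \<not> {(f ^^ n) x0, (f ^^ Suc n) x0} \<subseteq> U y)"
    by metis
  have "\<exists>n::nat. \<exists>V\<in>range U. {(f ^^ n) x0, (f ^^ Suc n) x0} \<subseteq> V"
    by (rule cover) (use U in auto)
  then show False using U by blast
qed

end
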